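(* Let $N=(G=(V,E),\sigma,u,s)$ be a skew-symmetric network and $f$ an IS-flow in $N$. Then $f$ has maximum value among all IS-flows in $N$ if and only if there is no r-augmenting path for $f$.
   Context: A skew-symmetric graph is a finite directed graph $G=(V,E)$ (parallel arcs allowed) with a map $\sigma$ of $V\cup E$ onto itself such that $\sigma(x)\ne x$, $\sigma(\sigma(x))=x$ for all $x$, $\sigma(V)=V$, and for each arc $a$ from $v$ to $w$, $\sigma(a)$ is an arc from $\sigma(w)$ to $\sigma(v)$; write $a'=\sigma(a)$. A function $h$ on $E$ is symmetric if $h(a)=h(\sigma(a))$. A skew-symmetric network is $N=(G,\sigma,u,s)$ with $u:E\to\mathbb Z_{\ge0}$ symmetric and source $s$; $s'=\sigma(s)$ is the sink. A flow is $f:E\to\mathbb R_{\ge0}$ with $f\le u$ and conservation ($\sum_{\text{out}}f-\sum_{\text{in}}f=0$) at every node other than $s,s'$; its value is $|f|=\sum_{\text{out of }s}f-\sum_{\text{into }s}f$. An IS-flow is an integer-valued symmetric flow. $G^+=(V,E^+)$ is obtained from $G$ by adding, for each arc $a=(x,y)\in E$, a reverse arc $a^R=(y,x)$; $\sigma$ extends by $\sigma(a^R)=(\sigma(a))^R$. The residual capacity is $u_f(a)=u(a)-f(a)$ for $a\in E$ and $u_f(a^R)=f(a)$. For a nonnegative integer symmetric function $h$ on the arcs of a skew-symmetric graph, a directed path $P$ is $h$-regular if $h(a)>0$ for every arc $a$ of $P$ and every arc $a$ of $P$ whose mate $a'$ also lies on $P$ satisfies $h(a)\ge2$. An r-augmenting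 path for $f$ is a $u_f$-regular path from $s$ to $s'$ in $G^+$. *)

theory Defs
  imports Complex_Main
begin

(* A finite directed multigraph: node set V, arc set E, each arc a goes from
   src a to trg a.  The skew symmetry sigma acts on nodes by sv and on arcs by se. *)

definition skew_symmetric_graph ::
  "'v set \<Rightarrow> 'e set \<Rightarrow> ('e \<Rightarrow> 'v) \<Rightarrow> ('e \<Rightarrow> 'v) \<Rightarrow> ('v \<Rightarrow> 'v) \<Rightarrow> ('e \<Rightarrow> 'e) \<Rightarrow> bool" where
  "skew_symmetric_graph V E src trg sv se \<longleftrightarrow>
     finite V \<and> finite E \<and>
     (\<forall>a\<in>E. src a \<in> V \<and> trg a \<in> V) \<and>
     sv ` V = V \<and> (\<forall>x\<in>V. sv x \<noteq> x \<and> sv (sv x) = x) \<and>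
     se ` E = E \<and> (\<forall>a\<in>E. se a \<noteq> a \<and> se (se a) = a) \<and>
     (\<forall>a\<in>E. src (se a) = sv (trg a) \<and> trg (se a) = sv (src a))"

definition symmetric_fun :: "'e set \<Rightarrow> ('e \<Rightarrow> 'e) \<Rightarrow> ('e \<Rightarrow> 'b) \<Rightarrow> bool" where
  "symmetric_fun E se h \<longleftrightarrow> (\<forall>a\<in>E. h (se a) = h a)"

definition skew_symmetric_network ::
  "'v set \<Rightarrow> 'e set \<Rightarrow> ('e \<Rightarrow> 'v) \<Rightarrow> ('e \<Rightarrow> 'v) \<Rightarrow> ('v \<Rightarrow> 'v) \<Rightarrow> ('e \<Rightarrow> 'e)
     \<Rightarrow> ('e \<Rightarrow> nat) \<Rightarrow> 'v \<Rightarrow> bool" where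
  "skew_symmetric_network V E src trg sv se u s \<longleftrightarrow>
     skew_symmetric_graph V E src trg sv se \<and> symmetric_fun E se u \<and> s \<in> V"

definition is_flow ::
  "'v set \<Rightarrow> 'e set \<Rightarrow> ('e \<Rightarrow> 'v) \<Rightarrow> ('e \<Rightarrow> 'v) \<Rightarrow> ('v \<Rightarrow> 'v)
     \<Rightarrow> ('e \<Rightarrow> nat) \<Rightarrow> 'v \<Rightarrow> ('e \<Rightarrow> real) \<Rightarrow> bool" where
  "is_flow V E src trg sv u s f \<longleftrightarrow>
     (\<forall>a\<in>E. 0 \<le> f a \<and> f a \<le> real (u a)) \<and>
     (\<forall>v\<in>V - {s, sv s}.
        (\<Sum>a\<in>{a\<in>E. src a = v}. f a) - (\<Sum>a\<in>{a\<in>E. trg a = v}. f a) = 0)"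

definition flow_value ::
  "'e set \<Rightarrow> ('e \<Rightarrow> 'v) \<Rightarrow> ('e \<Rightarrow> 'v) \<Rightarrow> 'v \<Rightarrow> ('e \<Rightarrow> real) \<Rightarrow> real" where
  "flow_value E src trg s f =
     (\<Sum>a\<in>{a\<in>E. src a = s}. f a) - (\<Sum>a\<in>{a\<in>E. trg a = s}. f a)"

definition is_IS_flow ::
  "'v set \<Rightarrow> 'e set \<Rightarrow> ('e \<Rightarrow> 'v) \<Rightarrow> ('e \<Rightarrow> 'v) \<Rightarrow> ('v \<Rightarrow> 'v) \<Rightarrow> ('e \<Rightarrow> 'e)
     \<Rightarrow> ('e \<Rightarrow> nat) \<Rightarrow> 'v \<Rightarrow> ('e \<Rightarrow> real) \<Rightarrow> bool" where
  "is_IS_flow V E src trg sv se u s f \<longleftrightarrow>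
     is_flow V E src trg sv u s f \<and> (\<forall>a\<in>E. f a \<in> \<int>) \<and> symmetric_fun E se f"

(* G^+: arcs (a, True) stand for a \<in> E, arcs (a, False) for the reverse arc a^R. *)
definition src_plus :: "('e \<Rightarrow> 'v) \<Rightarrow> ('e \<Rightarrow> 'v) \<Rightarrow> 'e \<times> bool \<Rightarrow> 'v" where
  "src_plus src trg p = (if snd p then src (fst p) else trg (fst p))"

definition trg_plus :: "('e \<Rightarrow> 'v) \<Rightarrow> ('e \<Rightarrow> 'v) \<Rightarrow> 'e \<times> bool \<Rightarrow> 'v" where
  "trg_plus src trg p = (if snd p then trg (fst p) else src (fst p))"

definition se_plus :: "('e \<Rightarrow> 'e) \<Rightarrow> 'e \<times> bool \<Rightarrow> 'e \<times> bool" where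
  "se_plus se p = (se (fst p), snd p)"

definition res_cap :: "('e \<Rightarrow> nat) \<Rightarrow> ('e \<Rightarrow> real) \<Rightarrow> 'e \<times> bool \<Rightarrow> real" where
  "res_cap u f p = (if snd p then real (u (fst p)) - f (fst p) else f (fst p))"

definition is_path_plus ::
  "'e set \<Rightarrow> ('e \<Rightarrow> 'v) \<Rightarrow> ('e \<Rightarrow> 'v) \<Rightarrow> ('e \<times> bool) list \<Rightarrow> 'v \<Rightarrow> 'v \<Rightarrow> bool" where
  "is_path_plus E src trg P x y \<longleftrightarrow>
     P \<noteq> [] \<and> set P \<subseteq> E \<times> UNIV \<and>
     src_plus src trg (hd P) = x \<and> trg_plus src trg (last P) = y \<and>
     (\<forall>i. Suc i < length P \<longrightarrow> trg_plus src trg (P ! i) = src_plus src trg (P ! Suc i)) \<and>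
     distinct (map (src_plus src trg) P @ [trg_plus src trg (last P)])"

definition regular_path ::
  "('e \<Rightarrow> 'e) \<Rightarrow> ('e \<times> bool \<Rightarrow> real) \<Rightarrow> ('e \<times> bool) list \<Rightarrow> bool" where
  "regular_path se h P \<longleftrightarrow>
     (\<forall>p\<in>set P. h p > 0) \<and>
     (\<forall>p\<in>set P. se_plus se p \<in> set P \<longrightarrow> h p \<ge> 2)"

definition r_augmenting_path ::
  "'e set \<Rightarrow> ('e \<Rightarrow> 'v) \<Rightarrow> ('e \<Rightarrow> 'v) \<Rightarrow> ('v \<Rightarrow> 'v) \<Rightarrow> ('e \<Rightarrow> 'e)
     \<Rightarrow> ('e \<Rightarrow> nat) \<Rightarrow> 'v \<Rightarrow> ('e \<Rightarrow> real) \<Rightarrow> ('e \<times> bool) list \<Rightarrow> bool" where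
  "r_augmenting_path E src trg sv se u s f P \<longleftrightarrow>
     is_path_plus E src trg P s (sv s) \<and> regular_path se (res_cap u f) P"

end

theory Submission
  imports Defs
begin

lemma chain_lemma:
  fixes T :: "'a set" and ts tt :: "'a \<Rightarrow> 'v" and \<tau> :: "'a \<Rightarrow> 'a"
    and sv :: "'v \<Rightarrow> 'v" and V :: "'v set" and s :: 'v
  assumes finT: "finite T"
    and tau: "\<forall>t\<in>T. \<tau> t \<in> T \<and> \<tau> (\<tau> t) = t \<and> \<tau> t \<noteq> t \<and> ts (\<tau> t) = sv (tt t) \<and> tt (\<tau> t) = sv (ts t)"
    and nodes: "\<forall>t\<in>T. ts t \<in> V \<and> tt t \<in> V"
    and svV: "\<forall>x\<in>V. sv x \<in> V \<and> sv (sv x) = x \<and> sv x \<noteq> x"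
    and sV: "s \<in> V"
    and bal: "\<forall>v\<in>V. v \<noteq> s \<longrightarrow> v \<noteq> sv s \<longrightarrow> card {t\<in>T. tt t = v} = card {t\<in>T. ts t = v}"
    and exc: "card {t\<in>T. tt t = s} < card {t\<in>T. ts t = s}"
  shows "\<exists>c n. (\<forall>k\<le>n. c k \<in> T) \<and> ts (c 0) = s \<and> tt (c n) = sv s \<and>
           (\<forall>k<n. ts (c (Suc k)) = tt (c k)) \<and> (\<forall>i\<le>n. \<forall>j\<le>n. c i \<noteq> \<tau> (c j))"
proof -
  define R where "R = {x\<in>V. x = s \<or> (x \<noteq> sv s \<and> x = (SOME y. y \<in> {x, sv x}))}"
  have R1: "x \<in> R \<longleftrightarrow> sv x \<notin> R" if "x \<in> V" for x
  proof -
    have ssv: "sv s \<noteq> s" "sv (sv s) = s" using svV sV by auto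
    have xx: "sv x \<in> V" "sv (sv x) = x" "sv x \<noteq> x" using svV that by auto
    show ?thesis
    proof (cases "x = s \<or> x = sv s")
      case True
      then show ?thesis using ssv xx sV unfolding R_def by auto
    next
      case False
      define c where "c = (SOME y. y \<in> {x, sv x})"
      have e: "{sv x, sv (sv x)} = {x, sv x}" using xx by auto
      have c1: "c \<in> {x, sv x}" unfolding c_def by (rule someI) auto
      have c2: "(SOME y. y \<in> {sv x, sv (sv x)}) = c" unfolding c_def e ..
      have n: "sv x \<noteq> s" "sv x \<noteq> sv s" using False ssv xx by metis+
      have a: "x \<in> R \<longleftrightarrow> x = c" using False that unfolding R_def c_def by auto
      have b: "sv x \<in> R \<longleftrightarrow> sv x = c" using n xx(1) c2 unfolding R_def by auto
      show ?thesis using a b c1 xx(3) by auto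
    qed
  qed
  have sR: "s \<in> R" using sV unfolding R_def by auto
  have s'R: "sv s \<notin> R" using R1[OF sV] sR by auto
  have RV: "R \<subseteq> V" unfolding R_def by auto
  define In where "In x = {t\<in>T. tt t = x}" for x
  define Out where "Out x = {t\<in>T. ts t = x}" for x
  have finIO: "finite (In x)" "finite (Out x)" for x unfolding In_def Out_def using finT by auto
  have "\<forall>x\<in>R. \<exists>\<phi>. inj_on \<phi> (In x) \<and> \<phi> ` In x \<subseteq> Out x \<and> (x \<noteq> s \<longrightarrow> \<phi> ` In x = Out x)"
  proof
    fix x assume xR: "x \<in> R"
    have cle: "card (In x) \<le> card (Out x)"
    proof (cases "x = s")
      case True then show ?thesis using exc unfolding In_def Out_def by auto
    next
      case False
      then have "x \<noteq> sv s" using xR s'R by auto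
      then show ?thesis using bal False xR RV unfolding In_def Out_def by auto
    qed
    obtain \<phi> where phi: "\<phi> ` In x \<subseteq> Out x" "inj_on \<phi> (In x)"
      using card_le_inj[OF finIO(1) finIO(2) cle] by blast
    have "x \<noteq> s \<longrightarrow> \<phi> ` In x = Out x"
    proof
      assume "x \<noteq> s"
      then have "x \<noteq> sv s" using xR s'R by auto
      then have "card (In x) = card (Out x)" using bal \<open>x \<noteq> s\<close> xR RV unfolding In_def Out_def by auto
      then have "card (\<phi> ` In x) = card (Out x)" using card_image[OF phi(2)] by simp
      then show "\<phi> ` In x = Out x" using card_subset_eq[OF finIO(2) phi(1)] by simp
    qed
    then show "\<exists>\<phi>. inj_on \<phi> (In x) \<and> \<phi> ` In x \<subseteq> Out x \<and> (x \<noteq> s \<longrightarrow> \<phi> ` In x = Out x)"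
      using phi by blast
  qed
  then obtain \<Phi> where \<Phi>: "\<forall>x\<in>R. inj_on (\<Phi> x) (In x) \<and> \<Phi> x ` In x \<subseteq> Out x \<and> (x \<noteq> s \<longrightarrow> \<Phi> x ` In x = Out x)"
    by metis
  define Nx where "Nx t t2 \<longleftrightarrow> t \<in> T \<and> t2 \<in> T \<and>
     (if tt t \<in> R then t2 = \<Phi> (tt t) t else (\<tau> t2 \<in> In (sv (tt t)) \<and> \<Phi> (sv (tt t)) (\<tau> t2) = \<tau> t))" for t t2
  have P1: "ts t2 = tt t" if "Nx t t2" for t t2
  proof (cases "tt t \<in> R")
    case True
    then have "t2 = \<Phi> (tt t) t" "t \<in> In (tt t)" using that unfolding Nx_def In_def by auto
    then have "t2 \<in> Out (tt t)" using \<Phi> True by blast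
    then show ?thesis unfolding Out_def by auto
  next
    case False
    then have "\<tau> t2 \<in> In (sv (tt t))" "t2 \<in> T" "t \<in> T" using that unfolding Nx_def by auto
    then have "sv (ts t2) = sv (tt t)" using tau unfolding In_def by auto
    then have "sv (sv (ts t2)) = sv (sv (tt t))" by simp
    then show ?thesis using svV nodes \<open>t2 \<in> T\<close> \<open>t \<in> T\<close> by auto
  qed
  have P3: "t = t'" if "Nx t t2" "Nx t' t2" for t t' t2
  proof -
    have e: "tt t = tt t'" using P1 that by metis
    have T: "t \<in> T" "t' \<in> T" "t2 \<in> T" using that unfolding Nx_def by auto
    show ?thesis
    proof (cases "tt t \<in> R")
      case True
      then have "\<Phi> (tt t) t = \<Phi> (tt t) t'" using that e unfolding Nx_def by auto
      moreover have "t \<in> In (tt t)" "t' \<in> In (tt t)" using T e unfolding In_def by auto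
      ultimately show ?thesis using \<Phi> True unfolding inj_on_def by blast
    next
      case False
      then have "\<tau> t = \<tau> t'" using that e unfolding Nx_def by auto
      then have "\<tau> (\<tau> t) = \<tau> (\<tau> t')" by simp
      then show ?thesis using tau T by auto
    qed
  qed
  have P4: "Nx (\<tau> t2) (\<tau> t)" if "Nx t t2" for t t2
  proof -
    have T: "t \<in> T" "t2 \<in> T" using that unfolding Nx_def by auto
    have yV: "tt t \<in> V" using nodes T by auto
    have e: "tt (\<tau> t2) = sv (tt t)" using tau T P1[OF that] by auto
    show ?thesis
    proof (cases "tt t \<in> R")
      case True
      then have "sv (tt t) \<notin> R" using R1 yV by auto
      moreover have "sv (sv (tt t)) = tt t" using svV yV by auto
      ultimately show ?thesis using that True T tau e unfolding Nx_def In_def by auto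
    next
      case False
      then have "sv (tt t) \<in> R" using R1 yV by auto
      then show ?thesis using that False T tau e unfolding Nx_def by auto
    qed
  qed
  have P5: "\<exists>t2. Nx t t2" if "t \<in> T" "tt t \<noteq> sv s" for t
  proof (cases "tt t \<in> R")
    case True
    have "t \<in> In (tt t)" using that unfolding In_def by auto
    then have "\<Phi> (tt t) t \<in> Out (tt t)" using \<Phi> True by blast
    then have "\<Phi> (tt t) t \<in> T" unfolding Out_def by auto
    then show ?thesis using True that unfolding Nx_def by auto
  next
    case False
    have yV: "tt t \<in> V" using nodes that by auto
    define x where "x = sv (tt t)"
    have xR: "x \<in> R" using R1 yV False unfolding x_def by auto
    have "x \<noteq> s" using that(2) svV yV unfolding x_def by metis
    then have im: "\<Phi> x ` In x = Out x" using \<Phi> xR by blast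
    have "\<tau> t \<in> Out x" using tau that unfolding Out_def x_def by auto
    then obtain r where r: "r \<in> In x" "\<Phi> x r = \<tau> t" using im by force
    have rT: "r \<in> T" using r unfolding In_def by auto
    have "Nx t (\<tau> r)" using False r rT tau that unfolding Nx_def x_def by auto
    then show ?thesis by blast
  qed
  have P7: "\<not> Nx r (\<tau> t)" if "t \<in> T" "\<not> (\<exists>t2. Nx t t2)" for t r
  proof
    assume "Nx r (\<tau> t)"
    then have "Nx (\<tau> (\<tau> t)) (\<tau> r)" by (rule P4)
    then show False using that tau by auto
  qed
  obtain t0 where t0: "t0 \<in> T" "ts t0 = s" "\<And>t. \<not> Nx t t0"
  proof -
    have "\<Phi> s ` In s \<subseteq> Out s" "inj_on (\<Phi> s) (In s)" using \<Phi> sR by auto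
    moreover have "card (In s) < card (Out s)" using exc unfolding In_def Out_def by auto
    ultimately have "card (\<Phi> s ` In s) \<noteq> card (Out s)" using card_image by (metis less_irrefl)
    then have "\<Phi> s ` In s \<noteq> Out s" by metis
    then obtain t0 where "t0 \<in> Out s" "t0 \<notin> \<Phi> s ` In s" using \<open>\<Phi> s ` In s \<subseteq> Out s\<close> by blast
    moreover have "\<not> Nx t t0" if "t0 \<in> Out s" "t0 \<notin> \<Phi> s ` In s" for t
    proof
      assume N: "Nx t t0"
      then have "tt t = s" using P1 that unfolding Out_def by force
      then show False using N sR that unfolding Nx_def In_def by auto
    qed
    ultimately show ?thesis using that unfolding Out_def by blast
  qed
  define c where "c = rec_nat t0 (\<lambda>_ t. SOME t2. Nx t t2)"
  have c0: "c 0 = t0" unfolding c_def by simp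
  have cS: "c (Suc k) = (SOME t2. Nx (c k) t2)" for k unfolding c_def by simp
  define good where "good k \<longleftrightarrow> (\<forall>i<k. Nx (c i) (c (Suc i)))" for k
  have cT: "c i \<in> T" if "good k" "i \<le> k" for i k
  proof (cases i)
    case 0 then show ?thesis using c0 t0 by simp
  next
    case (Suc j) then have "Nx (c j) (c i)" using that unfolding good_def by auto
    then show ?thesis unfolding Nx_def by auto
  qed
  have cinj: "i = j" if "good k" "i < j" "j \<le> k" "c i = c j" for i j k
    using that
  proof (induction i arbitrary: j)
    case 0
    then obtain j' where j: "j = Suc j'" by (cases j) auto
    then have "Nx (c j') (c j)" using 0 unfolding good_def by auto
    then show ?case using 0 t0 c0 by auto
  next
    case (Suc i)
    then obtain j' where j: "j = Suc j'" by (cases j) auto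
    have "j' < k" "i < k" using Suc.prems j by auto
    then have "Nx (c j') (c j)" "Nx (c i) (c (Suc i))" using Suc.prems(1) j unfolding good_def by auto
    then have "c i = c j'" using P3 Suc by metis
    then have "i = j'" using Suc.IH[of j'] Suc.prems j by auto
    then show ?case using j by simp
  qed
  have goodb: "k < card T" if "good k" for k
  proof -
    have "inj_on c {0..k}"
    proof (rule inj_onI)
      fix i j assume "i \<in> {0..k}" "j \<in> {0..k}" "c i = c j"
      then show "i = j" using cinj[OF that, of i j] cinj[OF that, of j i] by (cases "i < j"; cases "j < i") auto
    qed
    moreover have "c ` {0..k} \<subseteq> T" using cT[OF that] by auto
    ultimately have "card {0..k} \<le> card T" using card_inj_on_le finT by metis
    then show ?thesis by simp
  qed
  have gk: "good k \<or> (\<exists>n<k. good n \<and> \<not> (\<exists>t2. Nx (c n) t2))" for k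
  proof (induction k)
    case 0 then show ?case unfolding good_def by simp
  next
    case (Suc k)
    show ?case
    proof (cases "good k")
      case True
      show ?thesis
      proof (cases "\<exists>t2. Nx (c k) t2")
        case True
        then have "Nx (c k) (c (Suc k))" unfolding cS by (rule someI_ex)
        then have "good (Suc k)" using \<open>good k\<close> unfolding good_def by (auto simp: less_Suc_eq)
        then show ?thesis by simp
      next
        case False then show ?thesis using \<open>good k\<close> by auto
      qed
    next
      case False
      then obtain n where "n < k" "good n" "\<not> (\<exists>t2. Nx (c n) t2)" using Suc by blast
      then show ?thesis by (meson less_SucI)
    qed
  qed
  have "\<not> good (card T)" using goodb by blast
  then obtain n where gn: "good n" and nend: "\<not> (\<exists>t2. Nx (c n) t2)"
    using gk[of "card T"] by blast
  have cnT: "c n \<in> T" using cT gn by auto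
  have cn: "tt (c n) = sv s" using P5 cnT nend by blast
  have link: "\<forall>k<n. ts (c (Suc k)) = tt (c k)" using gn P1 unfolding good_def by auto
  have nomate: "c i \<noteq> \<tau> (c j)" if ij: "i \<le> n" "j \<le> n" for i j
  proof
    assume m: "c i = \<tau> (c j)"
    define d where "d k = \<tau> (c (n - k))" for k
    have dlink: "Nx (d k) (d (Suc k))" if "k < n" for k
    proof -
      have "n - k = Suc (n - Suc k)" using that by simp
      moreover have "n - Suc k < n" using that by simp
      ultimately have "Nx (c (n - Suc k)) (c (n - k))" using gn unfolding good_def by metis
      then show ?thesis unfolding d_def by (rule P4)
    qed
    have d0: "\<not> Nx r (d 0)" for r unfolding d_def using P7 cnT nend by simp
    have same: "i' = m' \<and> (\<forall>k\<le>i'. c k = d k)" if "i' \<le> n" "m' \<le> n" "c i' = d m'" for i' m'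
      using that
    proof (induction i' arbitrary: m')
      case 0
      show ?case
      proof (cases m')
        case 0 then show ?thesis using "0.prems" by simp
      next
        case (Suc m'')
        then have "Nx (d m'') (d m')" using dlink "0.prems" by simp
        then show ?thesis using "0.prems" t0 c0 by metis
      qed
    next
      case (Suc i')
      have "i' < n" using Suc.prems by simp
      then have N1: "Nx (c i') (c (Suc i'))" using gn unfolding good_def by simp
      show ?case
      proof (cases m')
        case 0
        then have "c (Suc i') = d 0" using Suc.prems by simp
        then have "Nx (c i') (d 0)" using N1 by simp
        then show ?thesis using d0 by blast
      next
        case (Suc m'')
        then have "Nx (d m'') (d m')" using dlink Suc.prems by simp
        moreover have "Nx (c i') (d m')" using N1 Suc.prems(3) by simp
        ultimately have "c i' = d m''" using P3 by blast
        moreover have "i' \<le> n" "m'' \<le> n" using Suc.prems \<open>m' = Suc m''\<close> by auto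
        ultimately have "i' = m'' \<and> (\<forall>k\<le>i'. c k = d k)" using Suc.IH[of m''] by blast
        then show ?thesis using Suc.prems \<open>m' = Suc m''\<close> by (auto simp: le_Suc_eq)
      qed
    qed
    have cjT: "c j \<in> T" "c i \<in> T" using cT[OF gn] ij by auto
    have "c i = d (n - j)" using m ij unfolding d_def by simp
    then have A: "i = n - j \<and> (\<forall>k\<le>i. c k = d k)" using same[of i "n - j"] ij by simp
    have "c j = \<tau> (c i)" using m tau cjT by auto
    then have "c j = d (n - i)" using ij unfolding d_def by simp
    then have B: "j = n - i \<and> (\<forall>k\<le>j. c k = d k)" using same[of j "n - i"] ij by simp
    define k0 where "k0 = n div 2"
    have k0le: "k0 \<le> i \<or> k0 \<le> j" using A B unfolding k0_def by linarith
    have ck0: "c k0 = \<tau> (c (n - k0))"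
    proof (cases "k0 \<le> i")
      case True then show ?thesis using A unfolding d_def by blast
    next
      case False then have "k0 \<le> j" using k0le by simp
      then show ?thesis using B unfolding d_def by blast
    qed
    have k0n: "k0 \<le> n" unfolding k0_def by simp
    have ck0T: "c k0 \<in> T" using cT[OF gn k0n] .
    have tk0: "\<tau> (c k0) \<noteq> c k0" using tau ck0T by blast
    show False
    proof (cases "even n")
      case True
      then have "n - k0 = k0" unfolding k0_def by auto
      then have "c k0 = \<tau> (c k0)" using ck0 by simp
      then show False using tk0 by simp
    next
      case False
      then have e: "n - k0 = Suc k0" "k0 < n" unfolding k0_def by presburger+
      have cs: "c (Suc k0) \<in> T" using cT[OF gn, of "Suc k0"] e by simp
      have "\<tau> (c k0) = \<tau> (\<tau> (c (Suc k0)))" using ck0 e by simp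
      also have "\<dots> = c (Suc k0)" using tau cs by blast
      finally have e2: "c (Suc k0) = \<tau> (c k0)" by simp
      have "ts (c (Suc k0)) = tt (c k0)" using link e by blast
      moreover have "ts (\<tau> (c k0)) = sv (tt (c k0))" using tau ck0T by blast
      ultimately have "sv (tt (c k0)) = tt (c k0)" using e2 by simp
      moreover have "tt (c k0) \<in> V" using nodes ck0T by blast
      ultimately show False using svV by blast
    qed
  qed
  show ?thesis
    apply (rule exI[of _ c], rule exI[of _ n])
    using cT[OF gn] c0 t0(1,2) cn link nomate by simp
qed

fun wk :: "('p \<Rightarrow> 'v) \<Rightarrow> ('p \<Rightarrow> 'v) \<Rightarrow> 'v \<Rightarrow> 'p list \<Rightarrow> 'v \<Rightarrow> bool" where
  "wk sp tp x [] y \<longleftrightarrow> x = y"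
| "wk sp tp x (p # Q) y \<longleftrightarrow> sp p = x \<and> wk sp tp (tp p) Q y"

lemma wk_append: "wk sp tp x (A @ B) y \<longleftrightarrow> (\<exists>m. wk sp tp x A m \<and> wk sp tp m B y)"
  by (induction A arbitrary: x) auto

lemma wk_props:
  assumes "wk sp tp x P y" "P \<noteq> []"
  shows "sp (hd P) = x \<and> tp (last P) = y \<and> (\<forall>i. Suc i < length P \<longrightarrow> tp (P ! i) = sp (P ! Suc i))
     \<and> map sp P @ [tp (last P)] = x # map tp P"
  using assms
proof (induction P arbitrary: x)
  case Nil then show ?case by simp
next
  case (Cons p Q)
  show ?case
  proof (cases "Q = []")
    case True then show ?thesis using Cons.prems by simp
  next
    case False
    have w: "wk sp tp (tp p) Q y" using Cons.prems by simp
    have IH: "sp (hd Q) = tp p \<and> tp (last Q) = y \<and> (\<forall>i. Suc i < length Q \<longrightarrow> tp (Q ! i) = sp (Q ! Suc i))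
     \<and> map sp Q @ [tp (last Q)] = tp p # map tp Q" using Cons.IH[OF w False] .
    have "\<forall>i. Suc i < length (p # Q) \<longrightarrow> tp ((p # Q) ! i) = sp ((p # Q) ! Suc i)"
    proof (intro allI impI)
      fix i assume "Suc i < length (p # Q)"
      then show "tp ((p # Q) ! i) = sp ((p # Q) ! Suc i)"
        using IH False by (cases i) (auto simp: hd_conv_nth)
    qed
    moreover have "map sp (p # Q) @ [tp (last (p # Q))] = x # map tp (p # Q)"
    proof -
      have "map sp (p # Q) @ [tp (last (p # Q))] = sp p # (map sp Q @ [tp (last Q)])" using False by simp
      also have "\<dots> = x # tp p # map tp Q"
      proof -
        have m: "map sp Q @ [tp (last Q)] = tp p # map tp Q" using IH by blast
        have "sp p = x" using Cons.prems by simp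
        then show ?thesis using m by (rule arg_cong2[where f=Cons])
      qed
      finally show ?thesis by simp
    qed
    ultimately show ?thesis using IH False Cons.prems by simp
  qed
qed

lemma wk_path:
  assumes "wk sp tp x Q y" "x \<noteq> y"
  shows "\<exists>P. wk sp tp x P y \<and> set P \<subseteq> set Q \<and> distinct (x # map tp P)"
  using assms
proof (induction Q arbitrary: x)
  case Nil then show ?case by simp
next
  case (Cons p Q)
  then have sp: "sp p = x" and w: "wk sp tp (tp p) Q y" by auto
  show ?case
  proof (cases "tp p = y")
    case True
    then show ?thesis using Cons.prems by (intro exI[of _ "[p]"]) auto
  next
    case False
    obtain P' where P': "wk sp tp (tp p) P' y" "set P' \<subseteq> set Q" "distinct (tp p # map tp P')"
      using Cons.IH[OF w False] by blast
    show ?thesis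
    proof (cases "x = tp p")
      case True
      then show ?thesis using P' by (intro exI[of _ P']) auto
    next
      case xne: False
      show ?thesis
      proof (cases "x \<in> set (map tp P')")
        case False
        then show ?thesis using P' sp xne by (intro exI[of _ "p # P'"]) auto
      next
        case True
        then obtain k where k: "k < length P'" "tp (P' ! k) = x"
          by (metis in_set_conv_nth length_map nth_map)
        have "P' = take (Suc k) P' @ drop (Suc k) P'" by simp
        then obtain m where m: "wk sp tp (tp p) (take (Suc k) P') m" "wk sp tp m (drop (Suc k) P') y"
          using P'(1) wk_append by metis
        have "take (Suc k) P' \<noteq> []" using k by (cases P') auto
        then have "tp (last (take (Suc k) P')) = m" using wk_props[OF m(1)] by simp
        moreover have "last (take (Suc k) P') = P' ! k" using k by (simp add: take_Suc_conv_app_nth)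
        ultimately have mx: "m = x" using k by simp
        have "distinct (map tp P')" using P' by simp
        then have "distinct (drop k (map tp P'))" by (rule distinct_drop)
        moreover have "drop k (map tp P') = x # drop (Suc k) (map tp P')"
          using k by (metis Cons_nth_drop_Suc length_map nth_map)
        then have "drop k (map tp P') = x # map tp (drop (Suc k) P')" by (simp add: drop_map)
        ultimately have "distinct (x # map tp (drop (Suc k) P'))" by simp
        moreover have "set (drop (Suc k) P') \<subseteq> set (p # Q)" using P'(2) by (meson order_trans set_drop_subset set_subset_Cons)
        ultimately show ?thesis using m mx by blast
      qed
    qed
  qed
qed

lemma chain_wk:
  assumes "\<forall>k<n. sp (F (Suc k)) = tp (F k)" "i \<le> n"
  shows "wk sp tp (sp (F i)) (map F [i..<Suc n]) (tp (F n))"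
  using assms(2)
proof (induction "n - i" arbitrary: i)
  case 0
  then have "i = n" by simp
  then show ?case by simp
next
  case (Suc d)
  then have "i < n" by simp
  then have "[i..<Suc n] = i # [Suc i..<Suc n]" by (simp add: upt_conv_Cons)
  moreover have "wk sp tp (sp (F (Suc i))) (map F [Suc i..<Suc n]) (tp (F n))"
    using Suc \<open>i < n\<close> by simp
  ultimately show ?case using assms(1) \<open>i < n\<close> by simp
qed

lemma wk_count:
  assumes "wk sp tp x P y"
  shows "real (length (filter (\<lambda>p. sp p = v) P)) - real (length (filter (\<lambda>p. tp p = v) P))
     = (if v = x then 1 else 0) - (if v = y then 1 else 0)"
  using assms
proof (induction P arbitrary: x)
  case Nil then show ?case by simp
next
  case (Cons a P)
  then have a: "sp a = x" and w: "wk sp tp (tp a) P y" by auto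
  have IH: "real (length (filter (\<lambda>p. sp p = v) P)) - real (length (filter (\<lambda>p. tp p = v) P))
     = (if v = tp a then 1 else 0) - (if v = y then 1 else 0)" using Cons.IH[OF w] .
  show ?case using IH a by auto
qed

lemma count_filter: "count_list (filter Q P) p = (if Q p then count_list P p else 0)"
  by (induction P) auto

lemma sum_count:
  assumes "finite A" "set P \<subseteq> A"
  shows "(\<Sum>p\<in>A. if Q p then real (count_list P p) else 0) = real (length (filter Q P))"
proof -
  have "(\<Sum>p\<in>A. if Q p then real (count_list P p) else 0) = (\<Sum>p\<in>A. real (count_list (filter Q P) p))"
    by (rule sum.cong) (simp_all add: count_filter)
  also have "\<dots> = real (\<Sum>p\<in>A. count_list (filter Q P) p)" by simp
  also have "(\<Sum>p\<in>A. count_list (filter Q P) p) = length (filter Q P)"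
    using sum_count_set[of "filter Q P" A] assms by auto
  finally show ?thesis .
qed

lemma sum_bool:
  assumes "finite E"
  shows "(\<Sum>p\<in>E \<times> (UNIV::bool set). F p) = (\<Sum>a\<in>E. F (a, True) + F (a, False))"
proof -
  have "(\<Sum>p\<in>E \<times> (UNIV::bool set). F p) = (\<Sum>a\<in>E. \<Sum>b\<in>UNIV. F (a, b))"
    by (simp add: sum.cartesian_product)
  also have "\<dots> = (\<Sum>a\<in>E. F (a, True) + F (a, False))" by (simp add: UNIV_bool add.commute)
  finally show ?thesis .
qed

lemma path_wk:
  assumes "P \<noteq> []" "sp (hd P) = x" "tp (last P) = y" "\<forall>i. Suc i < length P \<longrightarrow> tp (P ! i) = sp (P ! Suc i)"
  shows "wk sp tp x P y"
  using assms
proof (induction P arbitrary: x)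
  case Nil then show ?case by simp
next
  case (Cons p Q)
  show ?case
  proof (cases "Q = []")
    case True then show ?thesis using Cons.prems by simp
  next
    case False
    have "tp ((p # Q) ! 0) = sp ((p # Q) ! Suc 0)" using Cons.prems(4) False by (cases Q) auto
    then have h: "sp (hd Q) = tp p" using False by (cases Q) auto
    have l: "tp (last Q) = y" using Cons.prems(3) False by simp
    have i: "\<forall>i. Suc i < length Q \<longrightarrow> tp (Q ! i) = sp (Q ! Suc i)"
    proof (intro allI impI)
      fix i assume "Suc i < length Q"
      then have "Suc (Suc i) < length (p # Q)" by simp
      then have "tp ((p # Q) ! Suc i) = sp ((p # Q) ! Suc (Suc i))" using Cons.prems(4) by blast
      then show "tp (Q ! i) = sp (Q ! Suc i)" by simp
    qed
    have "wk sp tp (tp p) Q y" using Cons.IH[OF False h l i] .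
    then show ?thesis using Cons.prems(2) by simp
  qed
qed

lemma distinct_count: "distinct P \<Longrightarrow> count_list P p = (if p \<in> set P then 1 else 0)"
  by (induction P) auto

lemma sum_reindex_inv:
  assumes "finite E" "se ` E = E" "\<forall>a\<in>E. se (se a) = a"
  shows "(\<Sum>a\<in>E. G (se a)) = (\<Sum>a\<in>E. G a)"
proof -
  have "inj_on se E" by (metis assms(3) inj_onI)
  then have "sum G (se ` E) = sum (G \<circ> se) E" by (rule sum.reindex)
  then show ?thesis using assms(2) by simp
qed

lemma augment:
  assumes net: "skew_symmetric_network V E src trg sv se u s"
    and fIS: "is_IS_flow V E src trg sv se u s f"
    and aug: "r_augmenting_path E src trg sv se u s f P"
  shows "\<exists>g. is_IS_flow V E src trg sv se u s g \<and> flow_value E src trg s g = flow_value E src trg s f + 2"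
proof -
  define sp where "sp = src_plus src trg"
  define tp where "tp = trg_plus src trg"
  have finE: "finite E" and EV: "\<forall>a\<in>E. src a \<in> V \<and> trg a \<in> V" and svV: "sv ` V = V"
    and svinv: "\<forall>x\<in>V. sv x \<noteq> x \<and> sv (sv x) = x" and seE: "se ` E = E"
    and seinv: "\<forall>a\<in>E. se a \<noteq> a \<and> se (se a) = a"
    and sest: "\<forall>a\<in>E. src (se a) = sv (trg a) \<and> trg (se a) = sv (src a)"
    and usym: "\<forall>a\<in>E. u (se a) = u a" and sV: "s \<in> V"
    using net unfolding skew_symmetric_network_def skew_symmetric_graph_def symmetric_fun_def by auto
  have fb: "\<forall>a\<in>E. 0 \<le> f a \<and> f a \<le> real (u a)"
    and fcons: "\<forall>v\<in>V - {s, sv s}. (\<Sum>a\<in>{a\<in>E. src a = v}. f a) - (\<Sum>a\<in>{a\<in>E. trg a = v}. f a) = 0"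
    and fint: "\<forall>a\<in>E. f a \<in> \<int>" and fsym: "\<forall>a\<in>E. f (se a) = f a"
    using fIS unfolding is_IS_flow_def is_flow_def symmetric_fun_def by auto
  have path: "is_path_plus E src trg P s (sv s)" and reg: "regular_path se (res_cap u f) P"
    using aug unfolding r_augmenting_path_def by auto
  have Pne: "P \<noteq> []" and PE: "set P \<subseteq> E \<times> UNIV" and Phd: "sp (hd P) = s" and Plast: "tp (last P) = sv s"
    and Plink: "\<forall>i. Suc i < length P \<longrightarrow> tp (P ! i) = sp (P ! Suc i)"
    and Pdist: "distinct (map sp P @ [tp (last P)])"
    using path unfolding is_path_plus_def sp_def tp_def by auto
  have w: "wk sp tp s P (sv s)" using path_wk[OF Pne Phd Plast Plink] .
  have dP: "distinct P" using Pdist by (simp add: distinct_map)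
  have seinv2: "\<forall>a\<in>E. se (se a) = a" using seinv by blast
  have ssv: "sv s \<noteq> s" "sv (sv s) = s" using svinv sV by auto
  define cnt where "cnt p = real (count_list P p)" for p
  have cnt01: "cnt p = (if p \<in> set P then 1 else 0)" for p
    unfolding cnt_def using distinct_count[OF dP] by simp
  define A where "A a = cnt (a, True) - cnt (a, False)" for a
  define \<delta> where "\<delta> a = A a + A (se a)" for a
  define g where "g a = f a + \<delta> a" for a
  define N where "N v = (\<Sum>a\<in>E. if src a = v then A a else 0) - (\<Sum>a\<in>E. if trg a = v then A a else 0)" for v
  have N: "N v = (if v = s then 1 else 0) - (if v = sv s then 1 else 0)" for v
  proof -
    have "N v = (\<Sum>a\<in>E. (if sp (a, True) = v then cnt (a, True) else 0) + (if sp (a, False) = v then cnt (a, False) else 0))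
              - (\<Sum>a\<in>E. (if tp (a, True) = v then cnt (a, True) else 0) + (if tp (a, False) = v then cnt (a, False) else 0))"
      unfolding N_def sum_subtractf[symmetric]
      by (rule sum.cong) (auto simp: A_def sp_def tp_def src_plus_def trg_plus_def)
    also have "\<dots> = (\<Sum>p\<in>E \<times> (UNIV::bool set). if sp p = v then cnt p else 0)
              - (\<Sum>p\<in>E \<times> (UNIV::bool set). if tp p = v then cnt p else 0)"
      using sum_bool[OF finE, of "\<lambda>p. if sp p = v then cnt p else 0"]
        sum_bool[OF finE, of "\<lambda>p. if tp p = v then cnt p else 0"] by (simp only:)
    also have "\<dots> = real (length (filter (\<lambda>p. sp p = v) P)) - real (length (filter (\<lambda>p. tp p = v) P))"
      unfolding cnt_def using sum_count[OF finite_cartesian_product[OF finE finite_UNIV] PE] by simp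
    also have "\<dots> = (if v = s then 1 else 0) - (if v = sv s then 1 else 0)"
      using wk_count[OF w] .
    finally show ?thesis .
  qed
  have Nsv: "(\<Sum>a\<in>E. if src a = v then A (se a) else 0) - (\<Sum>a\<in>E. if trg a = v then A (se a) else 0) = - N (sv v)"
    if vV: "v \<in> V" for v
  proof -
    have 1: "(\<Sum>a\<in>E. if src a = v then A (se a) else 0) = (\<Sum>a\<in>E. if trg a = sv v then A a else 0)"
    proof -
      have "(\<Sum>a\<in>E. if src a = v then A (se a) else 0) = (\<Sum>a\<in>E. (\<lambda>b. if src (se b) = v then A b else 0) (se a))"
        by (rule sum.cong) (use seinv in auto)
      also have "\<dots> = (\<Sum>b\<in>E. if src (se b) = v then A b else 0)"
        using sum_reindex_inv[OF finE seE seinv2, of "\<lambda>b. if src (se b) = v then A b else 0"] by simp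
      also have "\<dots> = (\<Sum>a\<in>E. if trg a = sv v then A a else 0)"
      proof (rule sum.cong)
        fix b assume "b \<in> E"
        then have "src (se b) = sv (trg b)" "trg b \<in> V" using sest EV by auto
        then have "src (se b) = v \<longleftrightarrow> trg b = sv v" using svinv vV by metis
        then show "(if src (se b) = v then A b else 0) = (if trg b = sv v then A b else 0)" by simp
      qed simp
      finally show ?thesis .
    qed
    have 2: "(\<Sum>a\<in>E. if trg a = v then A (se a) else 0) = (\<Sum>a\<in>E. if src a = sv v then A a else 0)"
    proof -
      have "(\<Sum>a\<in>E. if trg a = v then A (se a) else 0) = (\<Sum>a\<in>E. (\<lambda>b. if trg (se b) = v then A b else 0) (se a))"
        by (rule sum.cong) (use seinv in auto)
      also have "\<dots> = (\<Sum>b\<in>E. if trg (se b) = v then A b else 0)"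
        using sum_reindex_inv[OF finE seE seinv2, of "\<lambda>b. if trg (se b) = v then A b else 0"] by simp
      also have "\<dots> = (\<Sum>a\<in>E. if src a = sv v then A a else 0)"
      proof (rule sum.cong)
        fix b assume "b \<in> E"
        then have "trg (se b) = sv (src b)" "src b \<in> V" using sest EV by auto
        then have "trg (se b) = v \<longleftrightarrow> src b = sv v" using svinv vV by metis
        then show "(if trg (se b) = v then A b else 0) = (if src b = sv v then A b else 0)" by simp
      qed simp
      finally show ?thesis .
    qed
    show ?thesis unfolding N_def 1 2 by simp
  qed
  have netd: "(\<Sum>a\<in>{a\<in>E. src a = v}. \<delta> a) - (\<Sum>a\<in>{a\<in>E. trg a = v}. \<delta> a)
      = 2 * ((if v = s then 1 else 0) - (if v = sv s then 1 else 0))" if vV: "v \<in> V" for v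
  proof -
    have "(\<Sum>a\<in>{a\<in>E. src a = v}. \<delta> a) - (\<Sum>a\<in>{a\<in>E. trg a = v}. \<delta> a)
       = N v + ((\<Sum>a\<in>E. if src a = v then A (se a) else 0) - (\<Sum>a\<in>E. if trg a = v then A (se a) else 0))"
      unfolding N_def \<delta>_def using finE
      by (simp add: sum.inter_filter sum.distrib if_distrib cong: if_cong)
    also have "\<dots> = N v - N (sv v)" using Nsv[OF vV] by simp
    also have "\<dots> = 2 * ((if v = s then 1 else 0) - (if v = sv s then 1 else 0))"
    proof -
      have "sv v = s \<longleftrightarrow> v = sv s" "sv v = sv s \<longleftrightarrow> v = s" using svinv vV sV by metis+
      then show ?thesis unfolding N by (auto simp: ssv)
    qed
    finally show ?thesis .
  qed
  have reg1: "\<forall>p\<in>set P. res_cap u f p > 0" and reg2: "\<forall>p\<in>set P. se_plus se p \<in> set P \<longrightarrow> res_cap u f p \<ge> 2"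
    using reg unfolding regular_path_def by auto
  have cnt0: "cnt p \<ge> 0" for p unfolding cnt_def by simp
  have bnd: "0 \<le> g a \<and> g a \<le> real (u a)" if aE: "a \<in> E" for a
  proof -
    have ua: "u (se a) = u a" and fa: "f (se a) = f a" using usym fsym aE by auto
    obtain z where z: "f a = of_int z" using fint aE Ints_cases by metis
    have i1: "1 \<le> real (u a) - f a" if "0 < real (u a) - f a"
    proof -
      have "0 < int (u a) - z" using that z by simp
      then have "1 \<le> int (u a) - z" by simp
      then show ?thesis using z by simp
    qed
    have i2: "1 \<le> f a" if "0 < f a"
    proof -
      have "0 < z" using that z by simp
      then have "1 \<le> z" by simp
      then show ?thesis using z by simp
    qed
    have rT: "res_cap u f (a, True) = real (u a) - f a" "res_cap u f (se a, True) = real (u a) - f a"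
      unfolding res_cap_def using ua fa by auto
    have rF: "res_cap u f (a, False) = f a" "res_cap u f (se a, False) = f a"
      unfolding res_cap_def using fa by auto
    have sp1: "se_plus se (a, b) = (se a, b)" for b unfolding se_plus_def by simp
    have fb': "0 \<le> f a" "f a \<le> real (u a)" using fb aE by auto
    have up: "cnt (a, True) + cnt (se a, True) \<le> real (u a) - f a"
    proof (cases "(a, True) \<in> set P")
      case True
      show ?thesis
      proof (cases "(se a, True) \<in> set P")
        case True
        then have "res_cap u f (a, True) \<ge> 2" using reg2 \<open>(a, True) \<in> set P\<close> sp1 by metis
        then show ?thesis using rT cnt01 True \<open>(a, True) \<in> set P\<close> by simp
      next
        case False
        have "res_cap u f (a, True) > 0" using reg1 \<open>(a, True) \<in> set P\<close> by blast
        then show ?thesis using rT cnt01 False \<open>(a, True) \<in> set P\<close> i1 by simp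
      qed
    next
      case False
      show ?thesis
      proof (cases "(se a, True) \<in> set P")
        case True
        have "res_cap u f (se a, True) > 0" using reg1 True by blast
        then show ?thesis using rT cnt01 True False i1 by simp
      next
        case False
        then show ?thesis using cnt01 \<open>(a, True) \<notin> set P\<close> fb' by simp
      qed
    qed
    have lo: "cnt (a, False) + cnt (se a, False) \<le> f a"
    proof (cases "(a, False) \<in> set P")
      case True
      show ?thesis
      proof (cases "(se a, False) \<in> set P")
        case True
        then have "res_cap u f (a, False) \<ge> 2" using reg2 \<open>(a, False) \<in> set P\<close> sp1 by metis
        then show ?thesis using rF cnt01 True \<open>(a, False) \<in> set P\<close> by simp
      next
        case False
        have "res_cap u f (a, False) > 0" using reg1 \<open>(a, False) \<in> set P\<close> by blast
        then show ?thesis using rF cnt01 False \<open>(a, False) \<in> set P\<close> i2 by simp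
      qed
    next
      case False
      show ?thesis
      proof (cases "(se a, False) \<in> set P")
        case True
        have "res_cap u f (se a, False) > 0" using reg1 True by blast
        then show ?thesis using rF cnt01 True False i2 by simp
      next
        case False
        then show ?thesis using cnt01 \<open>(a, False) \<notin> set P\<close> fb' by simp
      qed
    qed
    show ?thesis unfolding g_def \<delta>_def A_def using up lo cnt0[of "(a, True)"] cnt0[of "(a, False)"]
      cnt0[of "(se a, True)"] cnt0[of "(se a, False)"] fb' by linarith
  qed
  have gint: "g a \<in> \<int>" if "a \<in> E" for a
  proof -
    have "cnt p \<in> \<int>" for p unfolding cnt_def by simp
    then show ?thesis unfolding g_def \<delta>_def A_def using fint that by (simp add: Ints_add Ints_diff)
  qed
  have gsym: "g (se a) = g a" if "a \<in> E" for a
    unfolding g_def \<delta>_def using fsym seinv that by simp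
  have gsplit: "(\<Sum>a\<in>{a\<in>E. src a = v}. g a) - (\<Sum>a\<in>{a\<in>E. trg a = v}. g a)
     = ((\<Sum>a\<in>{a\<in>E. src a = v}. f a) - (\<Sum>a\<in>{a\<in>E. trg a = v}. f a))
      + ((\<Sum>a\<in>{a\<in>E. src a = v}. \<delta> a) - (\<Sum>a\<in>{a\<in>E. trg a = v}. \<delta> a))" for v
    unfolding g_def by (simp add: sum.distrib)
  have gcons: "\<forall>v\<in>V - {s, sv s}. (\<Sum>a\<in>{a\<in>E. src a = v}. g a) - (\<Sum>a\<in>{a\<in>E. trg a = v}. g a) = 0"
  proof
    fix v assume v: "v \<in> V - {s, sv s}"
    show "(\<Sum>a\<in>{a\<in>E. src a = v}. g a) - (\<Sum>a\<in>{a\<in>E. trg a = v}. g a) = 0"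
      unfolding gsplit using fcons v netd[of v] by auto
  qed
  have "is_IS_flow V E src trg sv se u s g"
    unfolding is_IS_flow_def is_flow_def symmetric_fun_def using bnd gint gsym gcons by auto
  moreover have "flow_value E src trg s g = flow_value E src trg s f + 2"
    unfolding flow_value_def gsplit using netd[OF sV] ssv by simp
  ultimately show ?thesis by blast
qed

lemma card_Sigma_filter:
  assumes "finite A" "\<forall>p\<in>A. finite (B p)"
  shows "card {t\<in>Sigma A B. Q (fst t)} = (\<Sum>p\<in>{p\<in>A. Q p}. card (B p))"
proof -
  have "{t\<in>Sigma A B. Q (fst t)} = Sigma {p\<in>A. Q p} B" by auto
  then show ?thesis using assms by (simp add: card_SigmaI)
qed

lemma find_path:
  fixes V :: "'v set" and E :: "'e set" and src trg :: "'e \<Rightarrow> 'v"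
    and sv :: "'v \<Rightarrow> 'v" and se :: "'e \<Rightarrow> 'e" and u :: "'e \<Rightarrow> nat" and s :: 'v
    and f g :: "'e \<Rightarrow> real"
  assumes net: "skew_symmetric_network V E src trg sv se u s"
    and fIS: "is_IS_flow V E src trg sv se u s f"
    and gIS: "is_IS_flow V E src trg sv se u s g"
    and gt: "flow_value E src trg s g > flow_value E src trg s f"
  shows "\<exists>P. r_augmenting_path E src trg sv se u s f P"
proof -
  define sp where "sp = src_plus src trg"
  define tp where "tp = trg_plus src trg"
  have finE: "finite E" and EV: "\<forall>a\<in>E. src a \<in> V \<and> trg a \<in> V" and svV: "sv ` V = V"
    and svinv: "\<forall>x\<in>V. sv x \<noteq> x \<and> sv (sv x) = x" and seE: "se ` E = E"
    and seinv: "\<forall>a\<in>E. se a \<noteq> a \<and> se (se a) = a"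
    and sest: "\<forall>a\<in>E. src (se a) = sv (trg a) \<and> trg (se a) = sv (src a)"
    and usym: "\<forall>a\<in>E. u (se a) = u a" and sV: "s \<in> V"
    using net unfolding skew_symmetric_network_def skew_symmetric_graph_def symmetric_fun_def by auto
  have seE': "a \<in> E \<Longrightarrow> se a \<in> E" for a using seE by blast
  have svV': "x \<in> V \<Longrightarrow> sv x \<in> V" for x using svV by blast
  have fb: "\<forall>a\<in>E. 0 \<le> f a \<and> f a \<le> real (u a)"
    and fcons: "\<forall>v\<in>V - {s, sv s}. (\<Sum>a\<in>{a\<in>E. src a = v}. f a) - (\<Sum>a\<in>{a\<in>E. trg a = v}. f a) = 0"
    and fint: "\<forall>a\<in>E. f a \<in> \<int>" and fsym: "\<forall>a\<in>E. f (se a) = f a"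
    using fIS unfolding is_IS_flow_def is_flow_def symmetric_fun_def by auto
  have gb: "\<forall>a\<in>E. 0 \<le> g a \<and> g a \<le> real (u a)"
    and gcons: "\<forall>v\<in>V - {s, sv s}. (\<Sum>a\<in>{a\<in>E. src a = v}. g a) - (\<Sum>a\<in>{a\<in>E. trg a = v}. g a) = 0"
    and gint: "\<forall>a\<in>E. g a \<in> \<int>" and gsym: "\<forall>a\<in>E. g (se a) = g a"
    using gIS unfolding is_IS_flow_def is_flow_def symmetric_fun_def by auto
  have ssv: "sv s \<noteq> s" "sv (sv s) = s" using svinv sV by auto
  define h where "h p = nat (if snd p then \<lfloor>g (fst p)\<rfloor> - \<lfloor>f (fst p)\<rfloor> else \<lfloor>f (fst p)\<rfloor> - \<lfloor>g (fst p)\<rfloor>)" for p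
  have fl: "of_int \<lfloor>f a\<rfloor> = f a" "of_int \<lfloor>g a\<rfloor> = g a" if "a \<in> E" for a
    using fint gint that by (auto simp: Ints_def)
  have hdiff: "real (h (a, True)) - real (h (a, False)) = g a - f a" if "a \<in> E" for a
  proof -
    define x where "x = \<lfloor>g a\<rfloor> - \<lfloor>f a\<rfloor>"
    have "g a - f a = of_int x" unfolding x_def of_int_diff fl[OF that] by (rule refl)
    moreover have "real (nat x) - real (nat (- x)) = of_int x" by (cases "x \<ge> 0") auto
    ultimately show ?thesis unfolding h_def x_def by simp
  qed
  define T where "T = Sigma (E \<times> (UNIV::bool set)) (\<lambda>p. {..<h p})"
  define ts where "ts t = sp (fst t)" for t :: "('e \<times> bool) \<times> nat"
  define tt where "tt t = tp (fst t)" for t :: "('e \<times> bool) \<times> nat"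
  define \<tau> where "\<tau> t = (se_plus se (fst t), snd t)" for t :: "('e \<times> bool) \<times> nat"
  have hsym: "h (se_plus se p) = h p" if "p \<in> E \<times> UNIV" for p
    using that fsym gsym unfolding h_def se_plus_def by auto
  have finT: "finite T" unfolding T_def using finE by auto
  have tau: "\<forall>t\<in>T. \<tau> t \<in> T \<and> \<tau> (\<tau> t) = t \<and> \<tau> t \<noteq> t \<and> ts (\<tau> t) = sv (tt t) \<and> tt (\<tau> t) = sv (ts t)"
  proof
    fix t assume tT: "t \<in> T"
    obtain a b i where t: "t = ((a, b), i)" by (metis prod.collapse)
    have aE: "a \<in> E" and ih: "i < h (a, b)" using tT t unfolding T_def by auto
    have "h (se a, b) = h (a, b)" using hsym[of "(a, b)"] aE unfolding se_plus_def by simp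
    then have "\<tau> t \<in> T" using seE' aE ih t unfolding T_def \<tau>_def se_plus_def by auto
    moreover have "\<tau> (\<tau> t) = t" using seinv aE t unfolding \<tau>_def se_plus_def by auto
    moreover have "\<tau> t \<noteq> t" using seinv aE t unfolding \<tau>_def se_plus_def by auto
    moreover have "ts (\<tau> t) = sv (tt t) \<and> tt (\<tau> t) = sv (ts t)"
      using sest aE t unfolding \<tau>_def se_plus_def ts_def tt_def sp_def tp_def src_plus_def trg_plus_def by auto
    ultimately show "\<tau> t \<in> T \<and> \<tau> (\<tau> t) = t \<and> \<tau> t \<noteq> t \<and> ts (\<tau> t) = sv (tt t) \<and> tt (\<tau> t) = sv (ts t)" by blast
  qed
  have nodes: "\<forall>t\<in>T. ts t \<in> V \<and> tt t \<in> V"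
    using EV unfolding T_def ts_def tt_def sp_def tp_def src_plus_def trg_plus_def by auto
  have svV2: "\<forall>x\<in>V. sv x \<in> V \<and> sv (sv x) = x \<and> sv x \<noteq> x" using svV' svinv by auto
  have cardS: "real (card {t\<in>T. ts t = v}) = (\<Sum>a\<in>E. (if src a = v then real (h (a, True)) else 0) + (if trg a = v then real (h (a, False)) else 0))" for v
  proof -
    have "card {t\<in>T. ts t = v} = (\<Sum>p\<in>{p\<in>E \<times> UNIV. sp p = v}. card {..<h p})"
      unfolding T_def ts_def using card_Sigma_filter[of "E \<times> UNIV" "\<lambda>p. {..<h p}" "\<lambda>p. sp p = v"] finE by simp
    then have "real (card {t\<in>T. ts t = v}) = (\<Sum>p\<in>E \<times> UNIV. if sp p = v then real (h p) else 0)"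
      using finE by (simp add: sum.inter_filter if_distrib cong: if_cong)
    also have "\<dots> = (\<Sum>a\<in>E. (if src a = v then real (h (a, True)) else 0) + (if trg a = v then real (h (a, False)) else 0))"
      using sum_bool[OF finE, of "\<lambda>p. if sp p = v then real (h p) else 0"] by (simp add: sp_def src_plus_def)
    finally show ?thesis .
  qed
  have cardT: "real (card {t\<in>T. tt t = v}) = (\<Sum>a\<in>E. (if trg a = v then real (h (a, True)) else 0) + (if src a = v then real (h (a, False)) else 0))" for v
  proof -
    have "card {t\<in>T. tt t = v} = (\<Sum>p\<in>{p\<in>E \<times> UNIV. tp p = v}. card {..<h p})"
      unfolding T_def tt_def using card_Sigma_filter[of "E \<times> UNIV" "\<lambda>p. {..<h p}" "\<lambda>p. tp p = v"] finE by simp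
    then have "real (card {t\<in>T. tt t = v}) = (\<Sum>p\<in>E \<times> UNIV. if tp p = v then real (h p) else 0)"
      using finE by (simp add: sum.inter_filter if_distrib cong: if_cong)
    also have "\<dots> = (\<Sum>a\<in>E. (if trg a = v then real (h (a, True)) else 0) + (if src a = v then real (h (a, False)) else 0))"
      using sum_bool[OF finE, of "\<lambda>p. if tp p = v then real (h p) else 0"] by (simp add: tp_def trg_plus_def)
    finally show ?thesis .
  qed
  have D: "real (card {t\<in>T. ts t = v}) - real (card {t\<in>T. tt t = v})
     = ((\<Sum>a\<in>{a\<in>E. src a = v}. g a) - (\<Sum>a\<in>{a\<in>E. trg a = v}. g a))
       - ((\<Sum>a\<in>{a\<in>E. src a = v}. f a) - (\<Sum>a\<in>{a\<in>E. trg a = v}. f a))" for v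
  proof -
    have "real (card {t\<in>T. ts t = v}) - real (card {t\<in>T. tt t = v})
       = (\<Sum>a\<in>E. (if src a = v then g a - f a else 0) - (if trg a = v then g a - f a else 0))"
      unfolding cardS cardT sum_subtractf[symmetric]
    proof (rule sum.cong)
      fix a assume aE: "a \<in> E"
      show "(if src a = v then real (h (a, True)) else 0) + (if trg a = v then real (h (a, False)) else 0) -
         ((if trg a = v then real (h (a, True)) else 0) + (if src a = v then real (h (a, False)) else 0)) =
         (if src a = v then g a - f a else 0) - (if trg a = v then g a - f a else 0)"
        using hdiff[OF aE] by auto
    qed simp
    also have "\<dots> = ((\<Sum>a\<in>{a\<in>E. src a = v}. g a) - (\<Sum>a\<in>{a\<in>E. trg a = v}. g a))
       - ((\<Sum>a\<in>{a\<in>E. src a = v}. f a) - (\<Sum>a\<in>{a\<in>E. trg a = v}. f a))"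
      unfolding sum.inter_filter[OF finE] sum_subtractf[symmetric] by (rule sum.cong) auto
    finally show ?thesis .
  qed
  have bal: "\<forall>v\<in>V. v \<noteq> s \<longrightarrow> v \<noteq> sv s \<longrightarrow> card {t\<in>T. tt t = v} = card {t\<in>T. ts t = v}"
  proof (intro ballI impI)
    fix v assume "v \<in> V" "v \<noteq> s" "v \<noteq> sv s"
    then have "real (card {t\<in>T. ts t = v}) - real (card {t\<in>T. tt t = v}) = 0"
      unfolding D using fcons gcons by simp
    then show "card {t\<in>T. tt t = v} = card {t\<in>T. ts t = v}" by simp
  qed
  have exc: "card {t\<in>T. tt t = s} < card {t\<in>T. ts t = s}"
  proof -
    have "real (card {t\<in>T. ts t = s}) - real (card {t\<in>T. tt t = s}) > 0"
      unfolding D using gt unfolding flow_value_def by simp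
    then show ?thesis by simp
  qed
  obtain c n where cT: "\<forall>k\<le>n. c k \<in> T" and c0: "ts (c 0) = s" and cn: "tt (c n) = sv s"
    and link: "\<forall>k<n. ts (c (Suc k)) = tt (c k)" and nomate: "\<forall>i\<le>n. \<forall>j\<le>n. c i \<noteq> \<tau> (c j)"
    using chain_lemma[OF finT tau nodes svV2 sV bal exc] by blast
  define W where "W = map (\<lambda>k. fst (c k)) [0..<Suc n]"
  have "wk sp tp (sp (fst (c 0))) W (tp (fst (c n)))"
    unfolding W_def by (rule chain_wk) (use link in \<open>auto simp: ts_def tt_def\<close>)
  then have wW: "wk sp tp s W (sv s)" using c0 cn unfolding ts_def tt_def by simp
  obtain P where wP: "wk sp tp s P (sv s)" and PW: "set P \<subseteq> set W" and Pd: "distinct (s # map tp P)"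
    using wk_path[OF wW] ssv by metis
  have Pne: "P \<noteq> []" using wP ssv by (cases P) auto
  have pr: "sp (hd P) = s \<and> tp (last P) = sv s \<and> (\<forall>i. Suc i < length P \<longrightarrow> tp (P ! i) = sp (P ! Suc i))
     \<and> map sp P @ [tp (last P)] = s # map tp P" using wk_props[OF wP Pne] .
  have inW: "\<exists>k\<le>n. p = fst (c k)" if "p \<in> set P" for p
  proof -
    have "p \<in> set W" using that PW by blast
    then have "p \<in> (\<lambda>k. fst (c k)) ` set [0..<Suc n]" unfolding W_def by (simp only: set_map)
    then obtain k where "k \<in> set [0..<Suc n]" "p = fst (c k)" by blast
    moreover then have "k \<le> n" by (simp only: set_upt atLeastLessThan_iff less_Suc_eq_le)
    ultimately show ?thesis by blast
  qed
  have ckT: "fst (c k) \<in> E \<times> UNIV \<and> snd (c k) < h (fst (c k))" if "k \<le> n" for k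
    using cT that unfolding T_def by (metis SigmaE lessThan_iff prod.collapse fst_conv snd_conv)
  have PE: "set P \<subseteq> E \<times> UNIV" using inW ckT by blast
  have hres: "real (h p) \<le> res_cap u f p" if pE: "p \<in> E \<times> UNIV" for p
  proof -
    obtain a b where p: "p = (a, b)" and aE: "a \<in> E" using pE by auto
    have "0 \<le> g a" "g a \<le> real (u a)" "0 \<le> f a" "f a \<le> real (u a)" using gb fb aE by auto
    moreover have "of_int \<lfloor>g a\<rfloor> = g a" "of_int \<lfloor>f a\<rfloor> = f a" using fl[OF aE] by auto
    ultimately show ?thesis unfolding p h_def res_cap_def by (cases b) (auto simp: of_nat_nat)
  qed
  have reg1: "\<forall>p\<in>set P. res_cap u f p > 0"
  proof
    fix p assume "p \<in> set P"
    then obtain k where k: "k \<le> n" "p = fst (c k)" using inW by blast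
    then have "h p > 0" "p \<in> E \<times> UNIV" using ckT[OF k(1)] by auto
    then show "res_cap u f p > 0" using hres[of p] by linarith
  qed
  have reg2: "\<forall>p\<in>set P. se_plus se p \<in> set P \<longrightarrow> res_cap u f p \<ge> 2"
  proof (intro ballI impI)
    fix p assume pP: "p \<in> set P" and qP: "se_plus se p \<in> set P"
    obtain i where i: "i \<le> n" "p = fst (c i)" using inW pP by blast
    obtain j where j: "j \<le> n" "se_plus se p = fst (c j)" using inW qP by blast
    have "c j \<noteq> \<tau> (c i)" using nomate i j by blast
    then have "snd (c j) \<noteq> snd (c i)" using i j unfolding \<tau>_def by (metis prod.collapse)
    moreover have "snd (c i) < h p" using ckT i by auto
    moreover have "snd (c j) < h p" using ckT[OF j(1)] j(2) hsym i ckT by metis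
    ultimately have "h p \<ge> 2" by linarith
    moreover have "p \<in> E \<times> UNIV" using ckT i by auto
    ultimately show "res_cap u f p \<ge> 2" using hres[of p] by linarith
  qed
  have dd: "distinct (map sp P @ [tp (last P)])"
  proof -
    have "map sp P @ [tp (last P)] = s # map tp P" using pr by blast
    then show ?thesis using Pd by (simp only:)
  qed
  have "is_path_plus E src trg P s (sv s)"
    unfolding is_path_plus_def using Pne PE pr dd unfolding sp_def tp_def by blast
  moreover have "regular_path se (res_cap u f) P"
    unfolding regular_path_def using reg1 reg2 by blast
  ultimately show ?thesis unfolding r_augmenting_path_def by blast
qed

theorem mainTheorem4:
  fixes V :: "'v set" and E :: "'e set" and src trg :: "'e \<Rightarrow> 'v"
    and sv :: "'v \<Rightarrow> 'v" and se :: "'e \<Rightarrow> 'e" and u :: "'e \<Rightarrow> nat" and s :: 'v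
    and f :: "'e \<Rightarrow> real"
  assumes "skew_symmetric_network V E src trg sv se u s"
    and "is_IS_flow V E src trg sv se u s f"
  shows "(\<forall>g. is_IS_flow V E src trg sv se u s g \<longrightarrow>
            flow_value E src trg s g \<le> flow_value E src trg s f)
         \<longleftrightarrow> \<not> (\<exists>P. r_augmenting_path E src trg sv se u s f P)"
proof
  assume mx: "\<forall>g. is_IS_flow V E src trg sv se u s g \<longrightarrow>
            flow_value E src trg s g \<le> flow_value E src trg s f"
  show "\<not> (\<exists>P. r_augmenting_path E src trg sv se u s f P)"
  proof
    assume "\<exists>P. r_augmenting_path E src trg sv se u s f P"
    then obtain P where "r_augmenting_path E src trg sv se u s f P" by blast
    then obtain g where "is_IS_flow V E src trg sv se u s g"
      "flow_value E src trg s g = flow_value E src trg s f + 2"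
      using augment[OF assms] by blast
    then show False using mx by fastforce
  qed
next
  assume np: "\<not> (\<exists>P. r_augmenting_path E src trg sv se u s f P)"
  show "\<forall>g. is_IS_flow V E src trg sv se u s g \<longrightarrow>
            flow_value E src trg s g \<le> flow_value E src trg s f"
  proof (intro allI impI)
    fix g assume gIS: "is_IS_flow V E src trg sv se u s g"
    show "flow_value E src trg s g \<le> flow_value E src trg s f"
    proof (rule ccontr)
      assume "\<not> flow_value E src trg s g \<le> flow_value E src trg s f"
      then have "flow_value E src trg s g > flow_value E src trg s f" by simp
      then show False using find_path[OF assms gIS] np by blast
    qed
  qed
qed

end
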